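(* Let $\approx$ be an equivalence relation on $\mathbb W$. Then $\approx$ satisfies (AP) if and only if it satisfies both (SP) and (DP), where: (AP) for all $A,B\in\mathbb W$: $A\approx B$ iff $A\setminus B\approx B\setminus A$; (SP) for all $A,A',B,B'\in\mathbb W$ with $A\cap B=\emptyset$ and $A'\cap B'=\emptyset$: if $A\approx A'$ and $B\approx B'$ then $A\cup B\approx A'\cup B'$; (DP) for all $A,A',C,C'\in\mathbb W$ with $A\subseteq C$ and $A'\subseteq C'$: if $A\approx A'$ and $C\approx C'$ then $C\setminus A\approx C'\setminus A'$.
   Context: Let $\mathbb N=\{0,1,2,\dots\}$. $\mathbb{W}$ is the family of finitary point sets: sets $A\subseteq\bigcup_{k\ge1}\mathbb N^k$ of finite tuples of natural numbers such that for every $n\in\mathbb N$ there is $h$ with $A\cap\{0,\dots,n\}^k=\emptyset$ for all $k>h$. *)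

theory Defs
  imports Main
begin

text \<open>Finite tuples of naturals of length \<ge> 1 are represented as nonempty lists.
  A tuple xs lies in {0..n}^k iff length xs = k and all entries are \<le> n.\<close>

definition finitary :: "nat list set \<Rightarrow> bool" where
  "finitary A \<longleftrightarrow> (\<forall>xs\<in>A. xs \<noteq> []) \<and>
     (\<forall>n::nat. \<exists>h::nat. \<forall>k>h. \<forall>xs\<in>A. \<not> (length xs = k \<and> (\<forall>x\<in>set xs. x \<le> n)))"

definition WW :: "nat list set set" where
  "WW = {A. finitary A}"

definition AP :: "(nat list set \<times> nat list set) set \<Rightarrow> bool" where
  "AP r \<longleftrightarrow> (\<forall>A\<in>WW. \<forall>B\<in>WW. (A, B) \<in> r \<longleftrightarrow> (A - B, B - A) \<in> r)"

definition SP :: "(nat list set \<times> nat list set) set \<Rightarrow> bool" where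
  "SP r \<longleftrightarrow> (\<forall>A\<in>WW. \<forall>A'\<in>WW. \<forall>B\<in>WW. \<forall>B'\<in>WW.
     A \<inter> B = {} \<longrightarrow> A' \<inter> B' = {} \<longrightarrow> (A, A') \<in> r \<longrightarrow> (B, B') \<in> r \<longrightarrow>
     (A \<union> B, A' \<union> B') \<in> r)"

definition DP :: "(nat list set \<times> nat list set) set \<Rightarrow> bool" where
  "DP r \<longleftrightarrow> (\<forall>A\<in>WW. \<forall>A'\<in>WW. \<forall>C\<in>WW. \<forall>C'\<in>WW.
     A \<subseteq> C \<longrightarrow> A' \<subseteq> C' \<longrightarrow> (A, A') \<in> r \<longrightarrow> (C, C') \<in> r \<longrightarrow>
     (C - A, C' - A') \<in> r)"

end

theory Submission
  imports Defs
begin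

lemma WW_sub: assumes "A \<in> WW" "B \<subseteq> A" shows "B \<in> WW"
proof -
  have 1: "\<forall>xs\<in>A. xs \<noteq> []" and 2: "\<forall>n::nat. \<exists>h::nat. \<forall>k>h. \<forall>xs\<in>A. \<not> (length xs = k \<and> (\<forall>x\<in>set xs. x \<le> n))"
    using assms(1) unfolding WW_def finitary_def by auto
  have "\<exists>h::nat. \<forall>k>h. \<forall>xs\<in>B. \<not> (length xs = k \<and> (\<forall>x\<in>set xs. x \<le> n))" for n
  proof -
    obtain h where "\<forall>k>h. \<forall>xs\<in>A. \<not> (length xs = k \<and> (\<forall>x\<in>set xs. x \<le> n))" using 2 by blast
    then show ?thesis using assms(2) by (intro exI[of _ h]) (meson subsetD)
  qed
  then show ?thesis using 1 assms(2) unfolding WW_def finitary_def by auto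
qed

lemma WW_Un: assumes "A \<in> WW" "B \<in> WW" shows "A \<union> B \<in> WW"
proof -
  have 1: "\<forall>xs\<in>A. xs \<noteq> []" and 2: "\<forall>n::nat. \<exists>h::nat. \<forall>k>h. \<forall>xs\<in>A. \<not> (length xs = k \<and> (\<forall>x\<in>set xs. x \<le> n))"
    using assms(1) unfolding WW_def finitary_def by auto
  have 3: "\<forall>xs\<in>B. xs \<noteq> []" and 4: "\<forall>n::nat. \<exists>h::nat. \<forall>k>h. \<forall>xs\<in>B. \<not> (length xs = k \<and> (\<forall>x\<in>set xs. x \<le> n))"
    using assms(2) unfolding WW_def finitary_def by auto
  have "\<exists>h::nat. \<forall>k>h. \<forall>xs\<in>A \<union> B. \<not> (length xs = k \<and> (\<forall>x\<in>set xs. x \<le> n))" for n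
  proof -
    obtain h1 where h1: "\<forall>k>h1. \<forall>xs\<in>A. \<not> (length xs = k \<and> (\<forall>x\<in>set xs. x \<le> n))" using 2 by blast
    obtain h2 where h2: "\<forall>k>h2. \<forall>xs\<in>B. \<not> (length xs = k \<and> (\<forall>x\<in>set xs. x \<le> n))" using 4 by blast
    have "\<forall>k>max h1 h2. \<forall>xs\<in>A \<union> B. \<not> (length xs = k \<and> (\<forall>x\<in>set xs. x \<le> n))"
    proof (intro allI impI ballI)
      fix k xs assume k: "max h1 h2 < k" and xs: "xs \<in> A \<union> B"
      show "\<not> (length xs = k \<and> (\<forall>x\<in>set xs. x \<le> n))"
      proof (cases "xs \<in> A")
        case True then show ?thesis using h1 k True by auto
      next
        case False then have "xs \<in> B" using xs by simp
        then show ?thesis using h2 k by auto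
      qed
    qed
    then show ?thesis by (rule exI)
  qed
  moreover have "\<forall>xs\<in>A \<union> B. xs \<noteq> []" using 1 3 by auto
  ultimately show ?thesis unfolding WW_def finitary_def by simp
qed

lemma G:
  assumes "AP r" "X \<in> WW" "Y \<in> WW" "X' \<in> WW" "Y' \<in> WW"
    "X - Y = X' - Y'" "Y - X = Y' - X'" "(X, Y) \<in> r"
  shows "(X', Y') \<in> r"
proof -
  have h: "\<And>A B. A \<in> WW \<Longrightarrow> B \<in> WW \<Longrightarrow> (A, B) \<in> r \<longleftrightarrow> (A - B, B - A) \<in> r"
    using assms(1) unfolding AP_def by blast
  have "(X - Y, Y - X) \<in> r" using h[OF assms(2,3)] assms(8) by simp
  then have "(X' - Y', Y' - X') \<in> r" using assms(6,7) by simp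
  then show ?thesis using h[OF assms(4,5)] by simp
qed

theorem proposition1p7:
  fixes r :: "(nat list set \<times> nat list set) set"
  assumes "equiv WW r"
  shows "AP r \<longleftrightarrow> SP r \<and> DP r"
proof -
  have sym: "(x, y) \<in> r \<Longrightarrow> (y, x) \<in> r" for x y
    using assms unfolding equiv_def by (meson symD)
  have trans: "(x, y) \<in> r \<Longrightarrow> (y, z) \<in> r \<Longrightarrow> (x, z) \<in> r" for x y z
    using assms unfolding equiv_def by (meson transD)
  have refl: "x \<in> WW \<Longrightarrow> (x, x) \<in> r" for x
    using assms unfolding equiv_def by (meson refl_onD)
  show ?thesis
  proof
    assume ap: "AP r"
    have "SP r" unfolding SP_def
    proof (intro ballI impI)
      fix A A' B B' assume W: "A \<in> WW" "A' \<in> WW" "B \<in> WW" "B' \<in> WW"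
        and d: "A \<inter> B = {}" "A' \<inter> B' = {}" and r1: "(A, A') \<in> r" and r2: "(B, B') \<in> r"
      define U where "U = A \<union> A' \<union> B \<union> B'"
      have U: "U \<in> WW" unfolding U_def by (intro WW_Un W)
      have sub: "S \<subseteq> U \<Longrightarrow> S \<in> WW" for S by (rule WW_sub[OF U])
      define p where "p = A \<inter> B'"
      define q where "q = B \<inter> A'"
      define a where "a = A - A' - B'"
      define b where "b = B - A' - B'"
      define c where "c = A' - A - B"
      define dd where "dd = B' - A - B"
      note D = p_def q_def a_def b_def c_def dd_def
      have w1: "p \<union> a \<union> b \<in> WW" "q \<union> c \<union> b \<in> WW" "q \<union> b \<union> c \<in> WW"
        "p \<union> dd \<union> c \<in> WW" "A \<union> B \<in> WW" "A' \<union> B' \<in> WW"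
        by (rule sub, unfold D U_def, blast)+
      have "A - A' = (p \<union> a \<union> b) - (q \<union> c \<union> b)" unfolding D using d by blast
      moreover have "A' - A = (q \<union> c \<union> b) - (p \<union> a \<union> b)" unfolding D using d by blast
      ultimately have s1: "(p \<union> a \<union> b, q \<union> c \<union> b) \<in> r" by (rule G[OF ap W(1,2) w1(1,2) _ _ r1])
      have "B - B' = (q \<union> b \<union> c) - (p \<union> dd \<union> c)" unfolding D using d by blast
      moreover have "B' - B = (p \<union> dd \<union> c) - (q \<union> b \<union> c)" unfolding D using d by blast
      ultimately have s2: "(q \<union> b \<union> c, p \<union> dd \<union> c) \<in> r" by (rule G[OF ap W(3,4) w1(3,4) _ _ r2])
      have e: "q \<union> c \<union> b = q \<union> b \<union> c" by blast
      have s3: "(p \<union> a \<union> b, p \<union> dd \<union> c) \<in> r" using trans[OF s1] s2 e by simp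
      have "(p \<union> a \<union> b) - (p \<union> dd \<union> c) = (A \<union> B) - (A' \<union> B')" unfolding D using d by blast
      moreover have "(p \<union> dd \<union> c) - (p \<union> a \<union> b) = (A' \<union> B') - (A \<union> B)" unfolding D using d by blast
      ultimately show "(A \<union> B, A' \<union> B') \<in> r" by (rule G[OF ap w1(1,4,5,6) _ _ s3])
    qed
    moreover have "DP r" unfolding DP_def
    proof (intro ballI impI)
      fix A A' C C' assume W: "A \<in> WW" "A' \<in> WW" "C \<in> WW" "C' \<in> WW"
        and d: "A \<subseteq> C" "A' \<subseteq> C'" and r1: "(A, A') \<in> r" and r2: "(C, C') \<in> r"
      define U where "U = A \<union> A' \<union> C \<union> C'"
      have U: "U \<in> WW" unfolding U_def by (intro WW_Un W)
      have sub: "S \<subseteq> U \<Longrightarrow> S \<in> WW" for S by (rule WW_sub[OF U])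
      define x1 where "x1 = C - A - C'"
      define x2 where "x2 = A - C'"
      define x3 where "x3 = C' - A' - C"
      define x4 where "x4 = A' - C"
      define x5 where "x5 = (A \<inter> C') - A'"
      define x6 where "x6 = (A' \<inter> C) - A"
      note D = x1_def x2_def x3_def x4_def x5_def x6_def
      have w1: "x1 \<union> x2 \<union> x5 \<in> WW" "x3 \<union> x4 \<union> x5 \<in> WW" "x1 \<union> x4 \<union> x6 \<in> WW"
        "C - A \<in> WW" "C' - A' \<in> WW"
        by (rule sub, unfold D U_def, blast)+
      have "C - C' = (x1 \<union> x2 \<union> x5) - (x3 \<union> x4 \<union> x5)" unfolding D using d by blast
      moreover have "C' - C = (x3 \<union> x4 \<union> x5) - (x1 \<union> x2 \<union> x5)" unfolding D using d by blast
      ultimately have s1: "(x1 \<union> x2 \<union> x5, x3 \<union> x4 \<union> x5) \<in> r" by (rule G[OF ap W(3,4) w1(1,2) _ _ r2])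
      have "A - A' = (x1 \<union> x2 \<union> x5) - (x1 \<union> x4 \<union> x6)" unfolding D using d by blast
      moreover have "A' - A = (x1 \<union> x4 \<union> x6) - (x1 \<union> x2 \<union> x5)" unfolding D using d by blast
      ultimately have s2: "(x1 \<union> x2 \<union> x5, x1 \<union> x4 \<union> x6) \<in> r" by (rule G[OF ap W(1,2) w1(1,3) _ _ r1])
      have s3: "(x1 \<union> x4 \<union> x6, x3 \<union> x4 \<union> x5) \<in> r" using trans[OF sym[OF s2] s1] .
      have "(x1 \<union> x4 \<union> x6) - (x3 \<union> x4 \<union> x5) = (C - A) - (C' - A')" unfolding D using d by blast
      moreover have "(x3 \<union> x4 \<union> x5) - (x1 \<union> x4 \<union> x6) = (C' - A') - (C - A)" unfolding D using d by blast
      ultimately show "(C - A, C' - A') \<in> r" by (rule G[OF ap w1(3,2,4,5) _ _ s3])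
    qed
    ultimately show "SP r \<and> DP r" by blast
  next
    assume "SP r \<and> DP r"
    then have sp: "SP r" and dp: "DP r" by auto
    have dpI: "\<And>A A' C C'. A \<in> WW \<Longrightarrow> A' \<in> WW \<Longrightarrow> C \<in> WW \<Longrightarrow> C' \<in> WW \<Longrightarrow>
     A \<subseteq> C \<Longrightarrow> A' \<subseteq> C' \<Longrightarrow> (A, A') \<in> r \<Longrightarrow> (C, C') \<in> r \<Longrightarrow> (C - A, C' - A') \<in> r"
      using dp unfolding DP_def by blast
    have spI: "\<And>A A' B B'. A \<in> WW \<Longrightarrow> A' \<in> WW \<Longrightarrow> B \<in> WW \<Longrightarrow> B' \<in> WW \<Longrightarrow>
     A \<inter> B = {} \<Longrightarrow> A' \<inter> B' = {} \<Longrightarrow> (A, A') \<in> r \<Longrightarrow> (B, B') \<in> r \<Longrightarrow> (A \<union> B, A' \<union> B') \<in> r"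
      using sp unfolding SP_def by blast
    show "AP r" unfolding AP_def
    proof (intro ballI)
      fix A B assume W: "A \<in> WW" "B \<in> WW"
      have I: "A \<inter> B \<in> WW" "A - B \<in> WW" "B - A \<in> WW" using W by (auto intro: WW_sub)
      show "(A, B) \<in> r \<longleftrightarrow> (A - B, B - A) \<in> r"
      proof
        assume "(A, B) \<in> r"
        then have "(A - A \<inter> B, B - A \<inter> B) \<in> r"
          using dpI[OF I(1) I(1) W _ _ refl[OF I(1)]] by blast
        moreover have "A - A \<inter> B = A - B" "B - A \<inter> B = B - A" by blast+
        ultimately show "(A - B, B - A) \<in> r" by simp
      next
        assume h: "(A - B, B - A) \<in> r"
        have "((A - B) \<union> (A \<inter> B), (B - A) \<union> (A \<inter> B)) \<in> r"
          using spI[OF I(2,3) I(1) I(1) _ _ h refl[OF I(1)]] by blast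
        moreover have "(A - B) \<union> (A \<inter> B) = A" "(B - A) \<union> (A \<inter> B) = B" by blast+
        ultimately show "(A, B) \<in> r" by simp
      qed
    qed
  qed
qed

end
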